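(* Let $f$ be a convergent power series in $\mathbf z=(z_1,\dots,z_n)$ with $f(\mathbf 0)=0$, let $P,Q$ be strictly positive weight vectors with normalized weights $\hat P=P/d(P,f)=(\hat p_1,\dots,\hat p_n)$, $\hat Q=Q/d(Q,f)=(\hat q_1,\dots,\hat q_n)$, and for $0\le s\le1$ let $\hat R_s=s\hat P+(1-s)\hat Q=(\hat r_{s,1},\dots,\hat r_{s,n})$. (1) If $P,Q$ are admissible, then for all $i,j$ and $0<s<1$, $\eta_{ij}(\hat R_s)\le\max\{\eta_{ij}(\hat P),\eta_{ij}(\hat Q)\}$; in particular $\eta(\hat R_s)\le\max\{\eta(\hat P),\eta(\hat Q)\}$. (2) If $P,Q$ are $J$-admissible, then for all $i,j$ and $0<s<1$, $\eta'_{ij}(\hat R_s)\le\max\{\eta'_{ij}(\hat P),\eta'_{ij}(\hat Q)\}$.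
   Context: For a convergent power series $g=\sum c_\nu\mathbf z^\nu$, $\Gamma_+(g)$ is the convex hull of $\bigcup_{c_\nu\ne0}(\nu+\mathbb R_{\ge0}^n)$; for a weight $X=(x_1,\dots,x_n)\in\mathbb R_{\ge0}^n$, $d(X,g)=\min\{\sum x_i\nu_i:\nu\in\Gamma_+(g)\}$ and $\Delta(X,g)$ is the face where it is attained. A weight is strictly positive if all its entries are positive. $f_j=\partial f/\partial z_j$. $P,Q$ are admissible if $\Delta(P,f)\cap\Delta(Q,f)\ne\emptyset$, and $J$-admissible if moreover $\Delta(P,f_i)\cap\Delta(Q,f_i)\ne\emptyset$ for every $i$. For a strictly positive $X=(x_1,\dots,x_n)$: $\eta_{ij}(X)=(1-x_j)/x_i$, $\eta(X)=1/\min_kx_k-1$, and $\eta'_{ij}(X)=d(X,f_j)/x_i$. *)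

theory Defs
  imports "HOL-Analysis.Analysis"
begin

text \<open>A power series in variables z_k (k ranging over the finite index type 'n) is
  represented by its coefficient function c, mapping a multi-index nu to c nu.\<close>

type_synonym 'n mindex = "nat ^ 'n"
type_synonym 'n pseries = "'n mindex \<Rightarrow> complex"

definition mdeg :: "'n::finite mindex \<Rightarrow> nat" where
  "mdeg \<nu> = (\<Sum>k\<in>UNIV. \<nu> $ k)"

definition convergent_ps :: "'n::finite pseries \<Rightarrow> bool" where
  "convergent_ps c \<longleftrightarrow> (\<exists>r>0. (\<lambda>\<nu>. norm (c \<nu>) * r ^ mdeg \<nu>) summable_on UNIV)"

definition ps_support :: "'n::finite pseries \<Rightarrow> 'n mindex set" where
  "ps_support c = {\<nu>. c \<nu> \<noteq> 0}"

definition newton_poly :: "'n::finite pseries \<Rightarrow> (real ^ 'n) set" where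
  "newton_poly c = convex hull (\<Union>\<nu>\<in>ps_support c. {x. \<forall>k. real (\<nu> $ k) \<le> x $ k})"

definition wsum :: "real ^ 'n::finite \<Rightarrow> real ^ 'n \<Rightarrow> real" where
  "wsum X x = (\<Sum>k\<in>UNIV. X $ k * x $ k)"

definition dval :: "real ^ 'n::finite \<Rightarrow> 'n pseries \<Rightarrow> real" where
  "dval X c = Inf (wsum X ` newton_poly c)"

definition Delta :: "real ^ 'n::finite \<Rightarrow> 'n pseries \<Rightarrow> (real ^ 'n) set" where
  "Delta X c = {x \<in> newton_poly c. wsum X x = dval X c}"

definition ps_partial :: "'n::finite pseries \<Rightarrow> 'n \<Rightarrow> 'n pseries" where
  "ps_partial c j = (\<lambda>\<nu>. of_nat (\<nu> $ j + 1) * c (\<chi> k. if k = j then \<nu> $ k + 1 else \<nu> $ k))"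

definition strictly_pos :: "real ^ 'n::finite \<Rightarrow> bool" where
  "strictly_pos X \<longleftrightarrow> (\<forall>k. 0 < X $ k)"

definition admissible :: "'n::finite pseries \<Rightarrow> real ^ 'n \<Rightarrow> real ^ 'n \<Rightarrow> bool" where
  "admissible c P Q \<longleftrightarrow> Delta P c \<inter> Delta Q c \<noteq> {}"

definition J_admissible :: "'n::finite pseries \<Rightarrow> real ^ 'n \<Rightarrow> real ^ 'n \<Rightarrow> bool" where
  "J_admissible c P Q \<longleftrightarrow> admissible c P Q \<and>
     (\<forall>i. Delta P (ps_partial c i) \<inter> Delta Q (ps_partial c i) \<noteq> {})"

definition eta_ij :: "real ^ 'n::finite \<Rightarrow> 'n \<Rightarrow> 'n \<Rightarrow> real" where
  "eta_ij X i j = (1 - X $ j) / X $ i"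

definition eta :: "real ^ 'n::finite \<Rightarrow> real" where
  "eta X = 1 / Min (range (\<lambda>k. X $ k)) - 1"

definition eta'_ij :: "'n::finite pseries \<Rightarrow> real ^ 'n \<Rightarrow> 'n \<Rightarrow> 'n \<Rightarrow> real" where
  "eta'_ij c X i j = dval X (ps_partial c j) / X $ i"

definition normw :: "real ^ 'n::finite \<Rightarrow> 'n pseries \<Rightarrow> real ^ 'n" where
  "normw X c = (1 / dval X c) *\<^sub>R X"

end

theory Submission
  imports Defs
begin

lemma wsum_lin: "wsum (a *\<^sub>R X + b *\<^sub>R Y) x = a * wsum X x + b * wsum Y x"
  unfolding wsum_def by (simp add: algebra_simps sum.distrib sum_distrib_left)

lemma wsum_scale: "wsum (a *\<^sub>R X) x = a * wsum X x"
  unfolding wsum_def by (simp add: algebra_simps sum_distrib_left)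

lemma newton_nonneg:
  assumes "x \<in> newton_poly (g::'n::finite pseries)"
  shows "0 \<le> x $ k"
proof -
  have "newton_poly g \<subseteq> {x. \<forall>k. 0 \<le> x $ k}"
    unfolding newton_poly_def
  proof (rule hull_minimal)
    show "(\<Union>\<nu>\<in>ps_support g. {x. \<forall>k. real (\<nu> $ k) \<le> x $ k}) \<subseteq> {x. \<forall>k. 0 \<le> x $ k}"
      using of_nat_0_le_iff order_trans by blast
    show "convex {x::real^'n. \<forall>k. 0 \<le> x $ k}"
      unfolding convex_def by (auto intro!: add_nonneg_nonneg mult_nonneg_nonneg)
  qed
  thus ?thesis using assms by auto
qed

lemma wsum_nonneg:
  assumes "x \<in> newton_poly g" "\<forall>k. 0 \<le> X $ k"
  shows "0 \<le> wsum X x"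
  unfolding wsum_def using assms(2) newton_nonneg[OF assms(1)]
  by (auto intro!: sum_nonneg mult_nonneg_nonneg)

lemma delta_min:
  assumes "y \<in> Delta X g" "\<forall>k. 0 \<le> X $ k" "x \<in> newton_poly g"
  shows "wsum X y \<le> wsum X x"
proof -
  have "bdd_below (wsum X ` newton_poly g)"
    using wsum_nonneg[OF _ assms(2)] by (auto intro!: bdd_belowI)
  hence "dval X g \<le> wsum X x" unfolding dval_def using assms(3) by (simp add: cInf_lower)
  thus ?thesis using assms(1) unfolding Delta_def by simp
qed

lemma dval_min:
  assumes "y \<in> newton_poly g" "\<forall>x\<in>newton_poly g. wsum X y \<le> wsum X x"
  shows "dval X g = wsum X y"
  unfolding dval_def using assms by (intro cInf_eq_minimum) auto

lemma dval_pos: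
  fixes f :: "'n::finite pseries" and P :: "real^'n"
  assumes "f 0 = 0" "strictly_pos P" "x \<in> newton_poly f"
  shows "0 < wsum P x"
proof -
  have "newton_poly f \<subseteq> {x. 0 < wsum P x}"
    unfolding newton_poly_def
  proof (rule hull_minimal)
    show "convex {x. 0 < wsum P x}"
      unfolding convex_def
    proof (intro allI impI ballI, clarsimp)
      fix x y :: "real^'n" and u v :: real
      assume h: "0 < wsum P x" "0 < wsum P y" "0 \<le> u" "0 \<le> v" "u + v = 1"
      have "wsum P (u *\<^sub>R x + v *\<^sub>R y) = u * wsum P x + v * wsum P y"
        unfolding wsum_def by (simp add: algebra_simps sum.distrib sum_distrib_left)
      moreover have "0 < u * wsum P x + v * wsum P y"
      proof (cases "u = 0")
        case True thus ?thesis using h by simp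
      next
        case False thus ?thesis using h by (simp add: add_pos_nonneg)
      qed
      ultimately show "0 < wsum P (u *\<^sub>R x + v *\<^sub>R y)" by simp
    qed
    show "(\<Union>\<nu>\<in>ps_support f. {x. \<forall>k. real (\<nu> $ k) \<le> x $ k}) \<subseteq> {x. 0 < wsum P x}"
    proof clarsimp
      fix \<nu> x assume nu: "\<nu> \<in> ps_support f" and hx: "\<forall>k. real (\<nu> $ k) \<le> x $ k"
      have "\<nu> \<noteq> 0" using nu assms(1) unfolding ps_support_def by auto
      then obtain k where k: "\<nu> $ k \<noteq> 0" by (auto simp: vec_eq_iff)
      have xnn: "\<forall>l. 0 \<le> x $ l" using hx by (meson of_nat_0_le_iff order_trans)
      have xk: "1 \<le> x $ k" using hx[rule_format, of k] k by linarith
      have Pp: "\<forall>l. 0 < P $ l" using assms(2) unfolding strictly_pos_def by auto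
      have "0 < P $ k * x $ k" using Pp xk by simp
      also have "P $ k * x $ k \<le> (\<Sum>l\<in>UNIV. P $ l * x $ l)"
      proof (rule member_le_sum)
        fix l assume "l \<in> UNIV - {k}"
        show "0 \<le> P $ l * x $ l" using Pp xnn by (simp add: less_imp_le)
      next show "finite (UNIV::'n set)" by simp qed simp
      finally show "0 < wsum P x" unfolding wsum_def .
    qed
  qed
  thus ?thesis using assms(3) by auto
qed

lemma mediant:
  fixes A B C D s :: real
  assumes "0 < C" "0 < D" "0 < s" "s < 1"
  shows "(s * A + (1 - s) * B) / (s * C + (1 - s) * D) \<le> max (A / C) (B / D)"
proof -
  define M where "M = max (A / C) (B / D)"
  have "A \<le> M * C" using assms by (simp add: M_def pos_divide_le_eq[symmetric])
  moreover have "B \<le> M * D" using assms by (simp add: M_def pos_divide_le_eq[symmetric])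
  ultimately have h1: "s * A \<le> s * (M * C)" "(1 - s) * B \<le> (1 - s) * (M * D)"
    using assms by (auto intro!: mult_left_mono)
  hence "s * A + (1 - s) * B \<le> M * (s * C + (1 - s) * D)"
    by (simp add: algebra_simps)
  moreover have "0 < s * C + (1 - s) * D" using assms by (simp add: add_pos_pos)
  ultimately show ?thesis by (simp add: M_def pos_divide_le_eq)
qed

theorem lemma13:
  fixes f :: "'n::finite pseries" and P Q :: "real ^ 'n"
  assumes "convergent_ps f"
    and "f 0 = 0"
    and "strictly_pos P" and "strictly_pos Q"
  defines "R \<equiv> (\<lambda>s::real. s *\<^sub>R normw P f + (1 - s) *\<^sub>R normw Q f)"
  shows "(admissible f P Q \<longrightarrow>
           (\<forall>i j s. 0 < s \<and> s < 1 \<longrightarrow>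
              eta_ij (R s) i j \<le> max (eta_ij (normw P f) i j) (eta_ij (normw Q f) i j)) \<and>
           (\<forall>s. 0 < s \<and> s < 1 \<longrightarrow>
              eta (R s) \<le> max (eta (normw P f)) (eta (normw Q f))))
       \<and> (J_admissible f P Q \<longrightarrow>
           (\<forall>i j s. 0 < s \<and> s < 1 \<longrightarrow>
              eta'_ij f (R s) i j \<le> max (eta'_ij f (normw P f) i j) (eta'_ij f (normw Q f) i j)))"
proof -
  have Pp: "\<forall>l. 0 < P $ l" and Qp: "\<forall>l. 0 < Q $ l"
    using assms(3,4) unfolding strictly_pos_def by auto
  have main: "0 < dval P f \<and> 0 < dval Q f" if adm: "admissible f P Q"
  proof -
    obtain x0 where "x0 \<in> Delta P f" "x0 \<in> Delta Q f" using adm unfolding admissible_def by auto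
    hence "x0 \<in> newton_poly f" "wsum P x0 = dval P f" "wsum Q x0 = dval Q f"
      unfolding Delta_def by auto
    thus ?thesis using dval_pos[where f=f and P=P, OF assms(2) assms(3)] dval_pos[where f=f and P=Q, OF assms(2) assms(4)]
      by metis
  qed
  have part1: "(\<forall>i j s. 0 < s \<and> s < 1 \<longrightarrow>
              eta_ij (R s) i j \<le> max (eta_ij (normw P f) i j) (eta_ij (normw Q f) i j)) \<and>
           (\<forall>s. 0 < s \<and> s < 1 \<longrightarrow>
              eta (R s) \<le> max (eta (normw P f)) (eta (normw Q f)))" if adm: "admissible f P Q"
  proof -
    define a b where "a = dval P f" "b = dval Q f"
    have ab: "0 < a" "0 < b" using main[OF adm] a_b_def by auto
    have nP: "\<And>k. normw P f $ k = P $ k / a" and nQ: "\<And>k. normw Q f $ k = Q $ k / b"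
      unfolding normw_def a_b_def by auto
    have pp: "\<And>k. 0 < normw P f $ k" "\<And>k. 0 < normw Q f $ k"
      using nP nQ Pp Qp ab by auto
    have Rk: "\<And>s k. R s $ k = s * normw P f $ k + (1 - s) * normw Q f $ k"
      unfolding R_def by simp
    show ?thesis
    proof (intro conjI allI impI)
      fix i j and s :: real assume s: "0 < s \<and> s < 1"
      have "eta_ij (R s) i j = (s * (1 - normw P f $ j) + (1 - s) * (1 - normw Q f $ j)) /
          (s * normw P f $ i + (1 - s) * normw Q f $ i)"
        unfolding eta_ij_def Rk by (simp add: algebra_simps)
      also have "\<dots> \<le> max (eta_ij (normw P f) i j) (eta_ij (normw Q f) i j)"
        unfolding eta_ij_def using s pp by (intro mediant) auto
      finally show "eta_ij (R s) i j \<le> max (eta_ij (normw P f) i j) (eta_ij (normw Q f) i j)" .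
    next
      fix s :: real assume s: "0 < s \<and> s < 1"
      define mp where "mp = Min (range (\<lambda>k. normw P f $ k))"
      define mq where "mq = Min (range (\<lambda>k. normw Q f $ k))"
      define mr where "mr = Min (range (\<lambda>k. R s $ k))"
      have mpk: "\<And>k. mp \<le> normw P f $ k" unfolding mp_def by simp
      have mqk: "\<And>k. mq \<le> normw Q f $ k" unfolding mq_def by simp
      have "mp \<in> range (\<lambda>k. normw P f $ k)" unfolding mp_def by (intro Min_in) auto
      hence mp0: "0 < mp" using pp by auto
      have "mq \<in> range (\<lambda>k. normw Q f $ k)" unfolding mq_def by (intro Min_in) auto
      hence mq0: "0 < mq" using pp by auto
      have "mr \<in> range (\<lambda>k. R s $ k)" unfolding mr_def by (intro Min_in) auto
      then obtain k where k: "mr = R s $ k" by auto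
      have c1: "s * mp \<le> s * normw P f $ k" using s mpk[of k] by (intro mult_left_mono) auto
      have c2: "(1 - s) * mq \<le> (1 - s) * normw Q f $ k" using s mqk[of k] by (intro mult_left_mono) auto
      have c: "s * mp + (1 - s) * mq \<le> mr" unfolding k Rk using c1 c2 by linarith
      have c3: "s * min mp mq \<le> s * mp" using s by (intro mult_left_mono) auto
      have c4: "(1 - s) * min mp mq \<le> (1 - s) * mq" using s by (intro mult_left_mono) auto
      have c0: "min mp mq \<le> s * mp + (1 - s) * mq"
        using c3 c4 by (simp add: algebra_simps)
      have m0: "0 < min mp mq" using mp0 mq0 by simp
      have "1 / mr \<le> 1 / min mp mq"
        using c c0 m0 by (intro divide_left_mono) auto
      also have "1 / min mp mq = max (1/mp) (1/mq)"
      proof (cases "mp \<le> mq")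
        case True
        hence "1/mq \<le> 1/mp" using mp0 by (intro divide_left_mono) auto
        thus ?thesis using True by (simp add: min_def max_def)
      next
        case False
        hence "1/mp \<le> 1/mq" using mq0 by (intro divide_left_mono) auto
        thus ?thesis using False by (simp add: min_def max_def)
      qed
      finally show "eta (R s) \<le> max (eta (normw P f)) (eta (normw Q f))"
        unfolding eta_def mp_def[symmetric] mq_def[symmetric] mr_def[symmetric] by linarith
    qed
  qed
  have part2: "\<forall>i j s. 0 < s \<and> s < 1 \<longrightarrow>
              eta'_ij f (R s) i j \<le> max (eta'_ij f (normw P f) i j) (eta'_ij f (normw Q f) i j)"
    if jadm: "J_admissible f P Q"
  proof (intro allI impI)
    fix i j and s :: real assume s: "0 < s \<and> s < 1"
    have adm: "admissible f P Q" using jadm unfolding J_admissible_def by auto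
    define a b where "a = dval P f" "b = dval Q f"
    have ab: "0 < a" "0 < b" using main[OF adm] a_b_def by auto
    have nP: "normw P f = (1 / a) *\<^sub>R P" and nQ: "normw Q f = (1 / b) *\<^sub>R Q"
      unfolding normw_def a_b_def by auto
    have pp: "\<And>k. 0 < normw P f $ k" "\<And>k. 0 < normw Q f $ k"
      using nP nQ Pp Qp ab by auto
    define g where "g = ps_partial f j"
    obtain y where y: "y \<in> Delta P g" "y \<in> Delta Q g"
      using jadm unfolding J_admissible_def g_def by blast
    have yN: "y \<in> newton_poly g" using y unfolding Delta_def by auto
    have minP: "\<And>x. x \<in> newton_poly g \<Longrightarrow> wsum P y \<le> wsum P x"
      using delta_min[OF y(1)] Pp less_imp_le by blast
    have minQ: "\<And>x. x \<in> newton_poly g \<Longrightarrow> wsum Q y \<le> wsum Q x"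
      using delta_min[OF y(2)] Qp less_imp_le by blast
    have dP: "dval (normw P f) g = wsum (normw P f) y"
    proof (rule dval_min[OF yN], rule ballI)
      fix x assume x: "x \<in> newton_poly g"
      show "wsum (normw P f) y \<le> wsum (normw P f) x"
        unfolding nP wsum_scale using minP[OF x] ab by (intro mult_left_mono) auto
    qed
    have dQ: "dval (normw Q f) g = wsum (normw Q f) y"
    proof (rule dval_min[OF yN], rule ballI)
      fix x assume x: "x \<in> newton_poly g"
      show "wsum (normw Q f) y \<le> wsum (normw Q f) x"
        unfolding nQ wsum_scale using minQ[OF x] ab by (intro mult_left_mono) auto
    qed
    have dR: "dval (R s) g = wsum (R s) y"
    proof (rule dval_min[OF yN], rule ballI)
      fix x assume x: "x \<in> newton_poly g"
      have "wsum (normw P f) y \<le> wsum (normw P f) x"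
        unfolding nP wsum_scale using minP[OF x] ab by (intro mult_left_mono) auto
      moreover have "wsum (normw Q f) y \<le> wsum (normw Q f) x"
        unfolding nQ wsum_scale using minQ[OF x] ab by (intro mult_left_mono) auto
      ultimately have "s * wsum (normw P f) y \<le> s * wsum (normw P f) x"
        "(1 - s) * wsum (normw Q f) y \<le> (1 - s) * wsum (normw Q f) x"
        using s by (auto intro!: mult_left_mono)
      thus "wsum (R s) y \<le> wsum (R s) x"
        unfolding R_def wsum_lin by linarith
    qed
    have "eta'_ij f (R s) i j = (s * wsum (normw P f) y + (1 - s) * wsum (normw Q f) y) /
        (s * normw P f $ i + (1 - s) * normw Q f $ i)"
      unfolding eta'_ij_def g_def[symmetric] dR unfolding R_def wsum_lin by simp
    also have "\<dots> \<le> max (eta'_ij f (normw P f) i j) (eta'_ij f (normw Q f) i j)"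
      unfolding eta'_ij_def g_def[symmetric] dP dQ using s pp by (intro mediant) auto
    finally show "eta'_ij f (R s) i j \<le> max (eta'_ij f (normw P f) i j) (eta'_ij f (normw Q f) i j)" .
  qed
  show ?thesis using part1 part2 by blast
qed

end
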